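(* Suppose sudoku flags $Z_1=(g_1,V_1)$ and $Z_2=(g_2,V_2)$, giving rise to orthogonal sudoku solutions with latin radix subsquares, possess data $(\Gamma _1, \beta _1)$ and $(\Gamma _2,\beta _2)$, respectively, with $\Gamma _i=\begin{pmatrix} a_i & b_i\\ c_i & d_i \end{pmatrix}$ for $i\in \{1,2\}$. Further, assume $\beta _1 - \beta _2$ and $b_1(d_2-\beta _2)-b_2(d_1-\beta _1)$ are nonzero. Then $$ g_{12}=V_1\cap V_2=\left[\begin{array}{c} I \\ \Gamma _{12} \end{array}\right], $$ where $\Gamma _{12}=\begin{pmatrix} a_{12} & b_{12} \\ c_{12} & d_{12} \end{pmatrix}$, and, with $D=b_1(d_2-\beta _2)-b_2(d_1-\beta _1)$, \begin{align*} a _{12}&=\frac{b_1b_2(c_1-c_2)+a_2b_1(d_2-\beta _2)-a_1b_2(d_1-\beta _1)}{D},\qquad b _{12}=\frac{b_1b_2(\beta _1-\beta _2)}{D},\\ c _{12}&=\frac{b_1c_1(d_2-\beta _2)-b_2c_2(d_1-\beta _1)+(a_2-a_1)(d_1-\beta _1)(d_2-\beta _2)}{D},\qquad d _{12}=\frac{\beta _1 b_1 (d_2-\beta _2)-\beta _2b_2(d_1-\beta _1)}{D}. \end{align*}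
   Context: Let $\mathbb F$ be the finite field of order $q$, with locations of order-$q^2$ sudoku solutions identified with $\mathbb F^4$ (coordinates: large row, row within large row, large column, column within large column). A sudoku flag is a pair $Z=(g,V)$ of subspaces of $\mathbb F^4$, $\dim g=2$, $\dim V=3$, $g\subset V$, with $g$ generating a linear sudoku solution (each symbol's locations form a coset of $g$; radix digits of symbols lie in cosets of $V$). Radix subsquares are the subsquares of the square of radix (base-$q$ leading) digits. It is known that such a flag gives a sudoku solution with latin radix subsquares iff $Z=(\langle (1,0,a,c),(0,1,b,d)\rangle,\langle (1,0,a,c),(0,1,b,d),(0,1,0,\beta)\rangle)$ with $b,\beta\neq0$ and $\Gamma=\begin{pmatrix} a&b\\c&d\end{pmatrix}$ nonsingular; $(\Gamma,\beta)$ is called the datum of $Z$. For $2\times 2$ matrices, $\left[\begin{array}{c} I\\ \Gamma\end{array}\right]$ denotes the subspace of $\mathbb F^4$ spanned by the columns of the $4\times 2$ matrix with $I$ (the $2\times 2$ identity) stacked above $\Gamma$. Two linear sudoku solutions generated by $g_1,g_2$ are orthogonal iff $g_1\cap g_2=\{0\}$. *)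

theory Defs
  imports "HOL-Analysis.Analysis"
begin

text \<open>Vectors of F^4, coordinates (large row, row within large row,
  large column, column within large column).\<close>
definition vec4 :: "'a \<Rightarrow> 'a \<Rightarrow> 'a \<Rightarrow> 'a \<Rightarrow> 'a ^ 4" where
  "vec4 x1 x2 x3 x4 = (\<chi> i. if i = 1 then x1 else if i = 2 then x2
                          else if i = 3 then x3 else x4)"

definition lin_span :: "('a::field ^ 4) list \<Rightarrow> ('a ^ 4) set" where
  "lin_span vs = {x. \<exists>cs. length cs = length vs \<and>
                       x = sum_list (map2 (\<lambda>c v. c *s v) cs vs)}"

text \<open>The subspace [I; Gamma] spanned by the columns of I stacked over
  Gamma = (a b; c d).\<close>
definition col_space :: "'a::field \<Rightarrow> 'a \<Rightarrow> 'a \<Rightarrow> 'a \<Rightarrow> ('a ^ 4) set" where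
  "col_space a b c d = lin_span [vec4 1 0 a c, vec4 0 1 b d]"

text \<open>(g, V) is a sudoku flag giving a sudoku solution with latin radix
  subsquares, with datum (Gamma, beta), Gamma = (a b; c d).\<close>
definition flag_with_datum ::
  "('a::field ^ 4) set \<Rightarrow> ('a ^ 4) set \<Rightarrow> 'a \<Rightarrow> 'a \<Rightarrow> 'a \<Rightarrow> 'a \<Rightarrow> 'a \<Rightarrow> bool" where
  "flag_with_datum g V a b c d \<beta> \<longleftrightarrow>
     g = lin_span [vec4 1 0 a c, vec4 0 1 b d] \<and>
     V = lin_span [vec4 1 0 a c, vec4 0 1 b d, vec4 0 1 0 \<beta>] \<and>
     b \<noteq> 0 \<and> \<beta> \<noteq> 0 \<and> a * d - b * c \<noteq> 0"

end

theory Submission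
  imports Defs
begin


lemma vec4_nth[simp]: "vec4 x1 x2 x3 x4 $ 1 = x1" "vec4 x1 x2 x3 x4 $ 2 = x2"
  "vec4 x1 x2 x3 x4 $ 3 = x3" "vec4 x1 x2 x3 x4 $ 4 = x4"
  by (simp_all add: vec4_def)

lemma span2: "lin_span [v1, v2] = {x. \<exists>s t. x = s *s v1 + t *s v2}"
  unfolding lin_span_def
  apply (auto simp: length_Suc_conv)
  subgoal by blast
  subgoal for s t by (rule exI[of _ "[s,t]"]) simp
  done

lemma span3: "lin_span [v1, v2, v3] = {x. \<exists>s t u. x = s *s v1 + t *s v2 + u *s v3}"
  unfolding lin_span_def
  apply (auto simp: length_Suc_conv add.assoc)
  subgoal by blast
  subgoal for s t u by (rule exI[of _ "[s,t,u]"]) (simp add: add.assoc)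
  done

lemma vec_eq4: "(x::'a^4) = y \<longleftrightarrow> x$1 = y$1 \<and> x$2 = y$2 \<and> x$3 = y$3 \<and> x$4 = y$4"
  by (simp add: vec_eq_iff forall_4)

lemma colsp: "col_space (a::'a::field) b c d = {x. x$3 = a*x$1 + b*x$2 \<and> x$4 = c*x$1 + d*x$2}"
  unfolding col_space_def span2
  apply (auto simp: vec_eq4 algebra_simps)
  done

lemma Vsp:
  assumes "b \<noteq> (0::'a::field)"
  shows "lin_span [vec4 1 0 a c, vec4 0 1 b d, vec4 0 1 0 \<beta>] =
     {x. b * (x$4 - x$1*c - x$2*\<beta>) = (x$3 - x$1*a)*(d-\<beta>)}"
  unfolding span3
proof (safe)
  fix s t u show "b * ((s *s vec4 1 0 a c + t *s vec4 0 1 b d + u *s vec4 0 1 0 \<beta>) $ 4 -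
          (s *s vec4 1 0 a c + t *s vec4 0 1 b d + u *s vec4 0 1 0 \<beta>) $ 1 * c -
          (s *s vec4 1 0 a c + t *s vec4 0 1 b d + u *s vec4 0 1 0 \<beta>) $ 2 * \<beta>) =
         ((s *s vec4 1 0 a c + t *s vec4 0 1 b d + u *s vec4 0 1 0 \<beta>) $ 3 -
          (s *s vec4 1 0 a c + t *s vec4 0 1 b d + u *s vec4 0 1 0 \<beta>) $ 1 * a) * (d - \<beta>)"
    by (simp add: algebra_simps)
next
  fix x :: "'a^4" assume h: "b * (x$4 - x$1*c - x$2*\<beta>) = (x$3 - x$1*a)*(d-\<beta>)"
  define t where "t = (x$3 - x$1*a)/b"
  show "\<exists>s t u. x = s *s vec4 1 0 a c + t *s vec4 0 1 b d + u *s vec4 0 1 0 \<beta>"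
    apply (rule exI[of _ "x$1"], rule exI[of _ t], rule exI[of _ "x$2 - t"])
    using h assms unfolding t_def by (simp add: vec_eq4 field_simps) (drule arg_cong[where f="\<lambda>z. b*z"], simp add: algebra_simps)
qed
lemma solve_lin: "z*D = X * s + Y * t \<Longrightarrow> D \<noteq> 0 \<Longrightarrow> z = X/D * s + Y/(D::'a::field)*t"
  by (simp add: field_simps)

lemma solve_lin2: "z = X/D * s + Y/(D::'a::field)*t \<Longrightarrow> D \<noteq> 0 \<Longrightarrow> z*D = X * s + Y * t"
  by (simp add: field_simps)

lemma alg:
  fixes s t z w a1 b1 c1 d1 \<beta>1 a2 b2 c2 d2 \<beta>2 :: "'a::field"
  assumes hD: "b1 * (d2 - \<beta>2) - b2 * (d1 - \<beta>1) \<noteq> 0"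
  shows "(b1 * (w - s*c1 - t*\<beta>1) = (z - s*a1)*(d1-\<beta>1) \<and>
          b2 * (w - s*c2 - t*\<beta>2) = (z - s*a2)*(d2-\<beta>2)) \<longleftrightarrow>
    (z = (b1 * b2 * (c1 - c2) + a2 * b1 * (d2 - \<beta>2) - a1 * b2 * (d1 - \<beta>1)) / (b1 * (d2 - \<beta>2) - b2 * (d1 - \<beta>1)) * s
       + (b1 * b2 * (\<beta>1 - \<beta>2)) / (b1 * (d2 - \<beta>2) - b2 * (d1 - \<beta>1)) * t \<and>
     w = (b1 * c1 * (d2 - \<beta>2) - b2 * c2 * (d1 - \<beta>1)
                    + (a2 - a1) * (d1 - \<beta>1) * (d2 - \<beta>2)) / (b1 * (d2 - \<beta>2) - b2 * (d1 - \<beta>1)) * s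
       + (\<beta>1 * b1 * (d2 - \<beta>2) - \<beta>2 * b2 * (d1 - \<beta>1)) / (b1 * (d2 - \<beta>2) - b2 * (d1 - \<beta>1)) * t)"
  (is "?E1 \<and> ?E2 \<longleftrightarrow> ?Z \<and> ?W")
proof
  assume h: "?E1 \<and> ?E2"
  define D where "D = b1 * (d2 - \<beta>2) - b2 * (d1 - \<beta>1)"
  have hz: "z * D = (b1 * b2 * (c1 - c2) + a2 * b1 * (d2 - \<beta>2) - a1 * b2 * (d1 - \<beta>1)) * s
       + (b1 * b2 * (\<beta>1 - \<beta>2)) * t"
  proof -
    from h have "b2 * (b1 * (w - s*c1 - t*\<beta>1)) - b1 * (b2 * (w - s*c2 - t*\<beta>2))
      = b2 * ((z - s*a1)*(d1-\<beta>1)) - b1 * ((z - s*a2)*(d2-\<beta>2))" by simp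
    thus ?thesis unfolding D_def by (simp add: algebra_simps)
  qed
  have hw: "w * D = (b1 * c1 * (d2 - \<beta>2) - b2 * c2 * (d1 - \<beta>1)
                    + (a2 - a1) * (d1 - \<beta>1) * (d2 - \<beta>2)) * s
       + (\<beta>1 * b1 * (d2 - \<beta>2) - \<beta>2 * b2 * (d1 - \<beta>1)) * t"
  proof -
    from h have "(d2-\<beta>2) * (b1 * (w - s*c1 - t*\<beta>1)) - (d1-\<beta>1) * (b2 * (w - s*c2 - t*\<beta>2))
      = (d2-\<beta>2) * ((z - s*a1)*(d1-\<beta>1)) - (d1-\<beta>1) * ((z - s*a2)*(d2-\<beta>2))" by simp
    thus ?thesis unfolding D_def by (simp add: algebra_simps)
  qed
  have "D \<noteq> 0" using hD D_def by simp
  then show "?Z \<and> ?W" using solve_lin[OF hz] solve_lin[OF hw] unfolding D_def by simp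
next
  assume h: "?Z \<and> ?W"
  define D where "D = b1 * (d2 - \<beta>2) - b2 * (d1 - \<beta>1)"
  have D0: "D \<noteq> 0" using hD D_def by simp
  have hz: "z * D = (b1 * b2 * (c1 - c2) + a2 * b1 * (d2 - \<beta>2) - a1 * b2 * (d1 - \<beta>1)) * s
       + (b1  *  b2  *  (\<beta>1 - \<beta>2))  *  t"
    using solve_lin2[OF conjunct1[OF h] D0[unfolded D_def]] unfolding D_def by simp
  have hw: "w  *  D = (b1  *  c1  *  (d2 - \<beta>2) - b2  *  c2  *  (d1 - \<beta>1)
                    + (a2 - a1)  *  (d1 - \<beta>1)  *  (d2 - \<beta>2))  *  s
       + (\<beta>1  *  b1  *  (d2 - \<beta>2) - \<beta>2  *  b2  *  (d1 - \<beta>1))  *  t"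
    using solve_lin2[OF conjunct2[OF h] D0[unfolded D_def]] unfolding D_def by simp
  have e1: "D  *  (b1  *  (w - s * c1 - t * \<beta>1)) = D  *  ((z - s * a1) * (d1-\<beta>1))"
  proof -
    have "D  *  (b1  *  (w - s * c1 - t * \<beta>1)) = b1  *  (w * D) - b1 * s  *  c1 * D - b1 * t * \<beta>1 * D"
      by (simp add: algebra_simps)
    also have "\<dots> = (z * D - s  *  a1 * D) * (d1-\<beta>1)" by (simp only: hz hw) (simp add: D_def algebra_simps)
    finally show ?thesis by (simp add: algebra_simps)
  qed
  have e2: "D  *  (b2  *  (w - s * c2 - t * \<beta>2)) = D  *  ((z - s * a2) * (d2-\<beta>2))"
  proof -
    have "D  *  (b2  *  (w - s * c2 - t * \<beta>2)) = b2  *  (w * D) - b2 * s  *  c2 * D - b2 * t * \<beta>2 * D"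
      by (simp add: algebra_simps)
    also have "\<dots> = (z * D - s  *  a2 * D) * (d2-\<beta>2)" by (simp only: hz hw) (simp add: D_def algebra_simps)
    finally show ?thesis by (simp add: algebra_simps)
  qed
  show "?E1 \<and> ?E2" using e1 e2 D0 by simp
qed

theorem proposition4p8:
  fixes g1 V1 g2 V2 :: "('a::{field,finite} ^ 4) set"
    and a1 b1 c1 d1 \<beta>1 a2 b2 c2 d2 \<beta>2 :: "'a"
  assumes Z1: "flag_with_datum g1 V1 a1 b1 c1 d1 \<beta>1"
    and Z2: "flag_with_datum g2 V2 a2 b2 c2 d2 \<beta>2"
    and orth: "g1 \<inter> g2 = {0}"
    and hb: "\<beta>1 - \<beta>2 \<noteq> 0"
    and hD: "b1 * (d2 - \<beta>2) - b2 * (d1 - \<beta>1) \<noteq> 0"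
  shows "let D = b1 * (d2 - \<beta>2) - b2 * (d1 - \<beta>1);
             a12 = (b1 * b2 * (c1 - c2) + a2 * b1 * (d2 - \<beta>2) - a1 * b2 * (d1 - \<beta>1)) / D;
             b12 = (b1 * b2 * (\<beta>1 - \<beta>2)) / D;
             c12 = (b1 * c1 * (d2 - \<beta>2) - b2 * c2 * (d1 - \<beta>1)
                    + (a2 - a1) * (d1 - \<beta>1) * (d2 - \<beta>2)) / D;
             d12 = (\<beta>1 * b1 * (d2 - \<beta>2) - \<beta>2 * b2 * (d1 - \<beta>1)) / D
         in V1 \<inter> V2 = col_space a12 b12 c12 d12"
  proof -
  have V1: "V1 = {x. b1 * (x$4 - x$1*c1 - x$2*\<beta>1) = (x$3 - x$1*a1)*(d1-\<beta>1)}"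
  proof -
    have a: "V1 = lin_span [vec4 1 0 a1 c1, vec4 0 1 b1 d1, vec4 0 1 0 \<beta>1]" "b1 \<noteq> 0"
      using Z1 unfolding flag_with_datum_def by simp_all
    show ?thesis unfolding a(1) Vsp[OF a(2)] ..
  qed
  have V2: "V2 = {x. b2 * (x$4 - x$1*c2 - x$2*\<beta>2) = (x$3 - x$1*a2)*(d2-\<beta>2)}"
  proof -
    have a: "V2 = lin_span [vec4 1 0 a2 c2, vec4 0 1 b2 d2, vec4 0 1 0 \<beta>2]" "b2 \<noteq> 0"
      using Z2 unfolding flag_with_datum_def by simp_all
    show ?thesis unfolding a(1) Vsp[OF a(2)] ..
  qed
  show ?thesis unfolding Let_def V1 V2 colsp
    apply (rule set_eqI)
    unfolding Int_iff mem_Collect_eq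
    subgoal for x using alg[OF hD, where w="x$4" and s="x$1" and t="x$2" and z="x$3"] by blast
    done
qed

end
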